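(* Let $X$ be a real Hilbert space and let $A,B$ be closed convex nonempty subsets of $X$ such that $E$ and $F$ are (nonempty and) bounded. Suppose that the couple $(A,B)$ is regular. Then the couple $(A,B)$ is $d$-stable.
   Context: $P_C$ is the metric projection onto a closed convex nonempty set $C$; $B_X$ the closed unit ball; $\mathrm{dist}(x,S)=\inf_{s\in S}\|x-s\|$, $\mathrm{dist}(S,T)=\inf_{s\in S}\mathrm{dist}(s,T)$. $E=\{a\in A:\mathrm{dist}(a,B)=\mathrm{dist}(A,B)\}$, $F=\{b\in B:\mathrm{dist}(b,A)=\mathrm{dist}(A,B)\}$, $v=P_{\overline{B-A}}(0)$ (projection of $0$ onto the closure of $B-A$). The couple $(A,B)$ (with $E,F$ nonempty) is regular if for each $\epsilon>0$ there is $\delta>0$ such that $\mathrm{dist}(x,E)\le\epsilon$ whenever $x\in X$ and $\max\{\mathrm{dist}(x,A),\mathrm{dist}(x,B-v)\}\le\delta$. Attouch–Wets convergence: for nonempty closed $C,D$ and $N\in\mathbb N$ let $e_N(C,D)=\sup_{c\in C\cap NB_X}\mathrm{dist}(c,D)$ ($0$ if $C\cap NB_X=\emptyset$) and $h_N(C,D)=\max\{e_N(C,D),e_N(D,C)\}$; $C_j\to C$ if $\lim_j h_N(C_j,C)=0$ for every $N\in\mathbb N$. Given sequences $\{A_n\},\{B_n\}$ of closed convex nonempty sets and $a_0\in X$, the perturbed alternating projections sequences are defined by $b_n=P_{B_n}(a_{n-1})$ and $a_n=P_{A_n}(b_n)$ for $n\in\mathbb N$. The couple $(A,B)$ (with $E,F$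 nonempty) is $d$-stable if for every choice of sequences $\{A_n\},\{B_n\}$ of closed convex nonempty sets converging in the Attouch–Wets sense to $A$ and $B$ respectively, and every starting point $a_0\in X$, the corresponding perturbed alternating projections sequences satisfy $\mathrm{dist}(a_n,E)\to0$ and $\mathrm{dist}(b_n,F)\to0$. *)

theory Defs
  imports "HOL-Analysis.Analysis"
begin

text \<open>Metric projection onto a set C (unique nearest point for closed convex
nonempty C in a Hilbert space).\<close>
definition metric_proj :: "'a::real_inner set \<Rightarrow> 'a \<Rightarrow> 'a" where
  "metric_proj C x = (THE y. y \<in> C \<and> (\<forall>z\<in>C. dist x y \<le> dist x z))"

definition set_dist :: "'a::metric_space set \<Rightarrow> 'a set \<Rightarrow> real" where
  "set_dist S T = (INF s\<in>S. infdist s T)"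

definition near_A :: "'a::real_normed_vector set \<Rightarrow> 'a set \<Rightarrow> 'a set" where
  "near_A A B = {a \<in> A. infdist a B = set_dist A B}"

definition near_B :: "'a::real_normed_vector set \<Rightarrow> 'a set \<Rightarrow> 'a set" where
  "near_B A B = {b \<in> B. infdist b A = set_dist A B}"

definition set_diff_minkowski :: "'a::real_normed_vector set \<Rightarrow> 'a set \<Rightarrow> 'a set" where
  "set_diff_minkowski B A = {b - a | a b. a \<in> A \<and> b \<in> B}"

definition gap_vector :: "'a::real_inner set \<Rightarrow> 'a set \<Rightarrow> 'a" where
  "gap_vector A B = metric_proj (closure (set_diff_minkowski B A)) 0"

definition regular_couple :: "'a::real_inner set \<Rightarrow> 'a set \<Rightarrow> bool" where
  "regular_couple A B \<longleftrightarrow>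
     (\<forall>\<epsilon>>0. \<exists>\<delta>>0. \<forall>x.
        max (infdist x A) (infdist x ((\<lambda>b. b - gap_vector A B) ` B)) \<le> \<delta>
        \<longrightarrow> infdist x (near_A A B) \<le> \<epsilon>)"

definition aw_excess :: "nat \<Rightarrow> 'a::real_normed_vector set \<Rightarrow> 'a set \<Rightarrow> real" where
  "aw_excess N C D =
     (if C \<inter> cball 0 (real N) = {} then 0
      else (SUP c\<in>C \<inter> cball 0 (real N). infdist c D))"

definition aw_h :: "nat \<Rightarrow> 'a::real_normed_vector set \<Rightarrow> 'a set \<Rightarrow> real" where
  "aw_h N C D = max (aw_excess N C D) (aw_excess N D C)"

definition aw_converges :: "(nat \<Rightarrow> 'a::real_normed_vector set) \<Rightarrow> 'a set \<Rightarrow> bool" where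
  "aw_converges Cs C \<longleftrightarrow> (\<forall>N::nat. N \<ge> 1 \<longrightarrow> (\<lambda>j. aw_h N (Cs j) C) \<longlonglongrightarrow> 0)"

text \<open>d-stability. Sequences are indexed by n >= 1 (index 0 of As, Bs is unused);
a 0 is the starting point; b n = P_{B_n}(a (n-1)), a n = P_{A_n}(b n).\<close>
definition d_stable :: "'a::real_inner set \<Rightarrow> 'a set \<Rightarrow> bool" where
  "d_stable A B \<longleftrightarrow>
     (\<forall>As Bs. (\<forall>n\<ge>1. closed (As n) \<and> convex (As n) \<and> As n \<noteq> {}
                    \<and> closed (Bs n) \<and> convex (Bs n) \<and> Bs n \<noteq> {})
        \<and> aw_converges As A \<and> aw_converges Bs B \<longrightarrow>
       (\<forall>a0 a b. a 0 = a0 \<and>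
           (\<forall>n\<ge>1. b n = metric_proj (Bs n) (a (n - 1)) \<and> a n = metric_proj (As n) (b n))
         \<longrightarrow> (\<lambda>n. infdist (a n) (near_A A B)) \<longlonglongrightarrow> 0
           \<and> (\<lambda>n. infdist (b n) (near_B A B)) \<longlonglongrightarrow> 0))"

end

theory Submission
  imports Defs
begin


lemma infdist_geI:
  assumes "A \<noteq> {}" "\<And>a. a \<in> A \<Longrightarrow> d \<le> dist x a"
  shows "d \<le> infdist x A"
  unfolding infdist_def using assms by (auto intro: cINF_greatest)

lemma infdist_lessE:
  assumes "A \<noteq> {}" "infdist x A < r"
  obtains a where "a \<in> A" "dist x a < r"
proof -
  have "bdd_below ((\<lambda>a. dist x a) ` A)" by (rule bdd_belowI[of _ 0]) auto
  then show ?thesis using assms that unfolding infdist_def by (auto simp: cINF_less_iff)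
qed

lemma parallelogram_mid:
  fixes x y z :: "'a::real_inner"
  shows "(norm (y - z))\<^sup>2 = 2 * (norm (x - y))\<^sup>2 + 2 * (norm (x - z))\<^sup>2 - 4 * (norm (x - (1/2) *\<^sub>R (y + z)))\<^sup>2"
  unfolding power2_norm_eq_inner
  by (simp add: inner_diff_left inner_diff_right inner_add_left inner_add_right inner_commute algebra_simps)

lemma lim_inv_n: "(\<lambda>n. 1 / (real n + 1)) \<longlonglongrightarrow> 0"
  using LIMSEQ_inverse_real_of_nat by (simp add: inverse_eq_divide add.commute)

lemma proj_exists:
  fixes C :: "'a::{real_inner,complete_space} set"
  assumes "closed C" "convex C" "C \<noteq> {}"
  shows "\<exists>y\<in>C. \<forall>z\<in>C. dist x y \<le> dist x z"
proof -
  define m where "m = infdist x C"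
  have m0: "m \<ge> 0" unfolding m_def by (rule infdist_nonneg)
  have "\<forall>n::nat. \<exists>y\<in>C. dist x y < m + 1 / (real n + 1)"
  proof
    fix n :: nat
    have "infdist x C < m + 1 / (real n + 1)" unfolding m_def by (simp add: add_pos_pos)
    then obtain a where "a \<in> C" "dist x a < m + 1 / (real n + 1)" using infdist_lessE[OF assms(3)] by blast
    then show "\<exists>y\<in>C. dist x y < m + 1 / (real n + 1)" by blast
  qed
  then obtain y where yC: "\<And>n. y n \<in> C" and yd: "\<And>n. dist x (y n) < m + 1 / (real n + 1)"
    by metis
  have ylow: "m \<le> dist x w" if "w \<in> C" for w unfolding m_def using infdist_le[OF that] .
  have key: "(norm (y i - y j))\<^sup>2 \<le> 8 * m * d + 4 * d\<^sup>2"
    if d: "1 / (real i + 1) \<le> d" "1 / (real j + 1) \<le> d" for i j d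
  proof -
    have mid: "(1/2) *\<^sub>R (y i + y j) \<in> C"
      using convexD[OF assms(2) yC[of i] yC[of j], of "1/2" "1/2"] by (simp add: scaleR_add_right)
    have h1: "m \<le> norm (x - (1/2) *\<^sub>R (y i + y j))" using ylow[OF mid] by (simp add: dist_norm)
    have h2: "norm (x - y i) \<le> m + d" using yd[of i] d by (simp add: dist_norm)
    have h3: "norm (x - y j) \<le> m + d" using yd[of j] d by (simp add: dist_norm)
    have "m\<^sup>2 \<le> (norm (x - (1/2) *\<^sub>R (y i + y j)))\<^sup>2" using h1 m0 by (simp add: power_mono)
    moreover have "(norm (x - y i))\<^sup>2 \<le> (m + d)\<^sup>2" using h2 by (simp add: power_mono)
    moreover have "(norm (x - y j))\<^sup>2 \<le> (m + d)\<^sup>2" using h3 by (simp add: power_mono)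
    ultimately show ?thesis using parallelogram_mid[of "y i" "y j" x]
      by (simp add: power2_eq_square algebra_simps)
  qed
  have "Cauchy y"
  proof (rule metric_CauchyI)
    fix e :: real assume e: "e > 0"
    define d where "d = min 1 (e\<^sup>2 / (8 * m + 8))"
    have d0: "d > 0" unfolding d_def using e m0 by auto
    obtain N :: nat where N: "1 / (real N + 1) < d"
      using reals_Archimedean[OF d0] by (metis inverse_eq_divide of_nat_Suc add.commute)
    have "dist (y i) (y j) < e" if "i \<ge> N" "j \<ge> N" for i j
    proof -
      have "1 / (real i + 1) \<le> 1 / (real N + 1)" using that by (simp add: frac_le)
      have di: "1 / (real i + 1) \<le> d" using that N by (smt (verit) frac_le of_nat_0_le_iff of_nat_mono)
      have dj: "1 / (real j + 1) \<le> d" using that N by (smt (verit) frac_le of_nat_0_le_iff of_nat_mono)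
      have "(norm (y i - y j))\<^sup>2 \<le> 8 * m * d + 4 * d\<^sup>2" by (rule key[OF di dj])
      also have "\<dots> \<le> 8 * m * d + 4 * d"
      proof -
        have "d \<le> 1" by (simp add: d_def)
        then have "d * d \<le> d * 1" using d0 by (intro mult_left_mono) auto
        then show ?thesis by (simp add: power2_eq_square)
      qed
      also have "\<dots> = (8 * m + 4) * d" by (simp add: algebra_simps)
      also have "\<dots> \<le> (8 * m + 4) * (e\<^sup>2 / (8 * m + 8))"
        using m0 by (intro mult_left_mono) (auto simp: d_def)
      also have "\<dots> < e\<^sup>2" using m0 e by (simp add: field_simps)
      finally have "(norm (y i - y j))\<^sup>2 < e\<^sup>2" .
      then show ?thesis using e by (simp add: dist_norm power_less_imp_less_base)
    qed
    then show "\<exists>N. \<forall>m\<ge>N. \<forall>n\<ge>N. dist (y m) (y n) < e" by blast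
  qed
  then obtain L where L: "y \<longlonglongrightarrow> L" using Cauchy_convergent_iff convergent_def by blast
  have LC: "L \<in> C" using closed_sequentially[OF assms(1) yC L] .
  have "dist x L \<le> dist x z" if z: "z \<in> C" for z
  proof -
    have t1: "(\<lambda>n. dist x (y n)) \<longlonglongrightarrow> dist x L" by (intro tendsto_intros L)
    have t2: "(\<lambda>n. dist x z + 1 / (real n + 1)) \<longlonglongrightarrow> dist x z + 0"
      by (intro tendsto_intros lim_inv_n)
    have "\<forall>n\<ge>0. dist x (y n) \<le> dist x z + 1 / (real n + 1)"
      using yd ylow[OF z] by (smt (verit))
    then show ?thesis
      using LIMSEQ_le[OF t1 t2] by auto
  qed
  then show ?thesis using LC by blast
qed



lemma proj_spec:
  fixes C :: "'a::{real_inner,complete_space} set"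
  assumes "closed C" "convex C" "C \<noteq> {}"
  shows "metric_proj C x \<in> C \<and> (\<forall>z\<in>C. dist x (metric_proj C x) \<le> dist x z)"
proof -
  obtain y where y: "y \<in> C" "\<forall>z\<in>C. dist x y \<le> dist x z" using proj_exists[OF assms] by blast
  have "\<exists>!y. y \<in> C \<and> (\<forall>z\<in>C. dist x y \<le> dist x z)"
    using y any_closest_point_unique[OF assms(2,1)] by blast
  then show ?thesis unfolding metric_proj_def by (rule theI')
qed

lemma proj_unique:
  fixes C :: "'a::{real_inner,complete_space} set"
  assumes "closed C" "convex C" "y \<in> C" "\<forall>z\<in>C. dist x y \<le> dist x z"
  shows "metric_proj C x = y"
  using proj_spec[OF assms(1,2)] assms any_closest_point_unique[OF assms(2,1)] by blast

lemma proj_in: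
  fixes C :: "'a::{real_inner,complete_space} set"
  assumes "closed C" "convex C" "C \<noteq> {}"
  shows "metric_proj C x \<in> C"
  using proj_spec[OF assms] by blast

lemma proj_le:
  fixes C :: "'a::{real_inner,complete_space} set"
  assumes "closed C" "convex C" "z \<in> C"
  shows "dist x (metric_proj C x) \<le> dist x z"
  using proj_spec[OF assms(1,2)] assms(3) by blast

lemma proj_dot:
  fixes C :: "'a::{real_inner,complete_space} set"
  assumes "closed C" "convex C" "z \<in> C"
  shows "inner (x - metric_proj C x) (z - metric_proj C x) \<le> 0"
  using proj_spec[OF assms(1,2)] assms any_closest_point_dot[OF assms(2,1)] by blast

lemma proj_infdist:
  fixes C :: "'a::{real_inner,complete_space} set"
  assumes "closed C" "convex C" "C \<noteq> {}"
  shows "infdist x C = dist x (metric_proj C x)"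
  using proj_spec[OF assms] infdist_le[of "metric_proj C x" C x] infdist_geI[OF assms(3), of "dist x (metric_proj C x)" x]
  by (meson antisym)

lemma proj_pyth:
  fixes C :: "'a::{real_inner,complete_space} set"
  assumes "closed C" "convex C" "z \<in> C"
  shows "(norm (x - metric_proj C x))\<^sup>2 + (norm (metric_proj C x - z))\<^sup>2 \<le> (norm (x - z))\<^sup>2"
proof -
  define p where "p = metric_proj C x"
  have d: "inner (x - p) (z - p) \<le> 0" unfolding p_def by (rule proj_dot[OF assms])
  have "x - z = (x - p) - (z - p)" by simp
  then have "(norm (x - z))\<^sup>2 = (norm (x - p))\<^sup>2 + (norm (z - p))\<^sup>2 - 2 * inner (x - p) (z - p)"
    by (simp only: power2_norm_eq_inner) (simp add: inner_diff_left inner_diff_right inner_commute)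
  moreover have "norm (p - z) = norm (z - p)" by (rule norm_minus_commute)
  ultimately show ?thesis using d unfolding p_def[symmetric] by simp
qed

lemma norm_diff_sq:
  fixes a b :: "'a::real_inner"
  shows "(norm (a - b))\<^sup>2 = (norm a)\<^sup>2 - 2 * inner a b + (norm b)\<^sup>2"
  unfolding power2_norm_eq_inner by (simp add: inner_diff_left inner_diff_right inner_commute[of b a])

lemma firm_aux:
  fixes x y p q :: "'a::real_inner"
  assumes d1: "inner (x - p) (q - p) \<le> 0" and d2: "inner (y - q) (p - q) \<le> 0"
  shows "(norm (p - q))\<^sup>2 + (norm ((x - p) - (y - q)))\<^sup>2 \<le> (norm (x - y))\<^sup>2"
proof -
  have a: "inner (x - p) (q - p) = inner (p - x) (p - q)"
    by (metis inner_minus_left inner_minus_right minus_diff_eq)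
  have v: "(p - x) + (y - q) = (p - q) - (x - y)" by (simp add: algebra_simps)
  have "inner (p - x) (p - q) + inner (y - q) (p - q) = inner ((p - q) - (x - y)) (p - q)"
    by (simp only: inner_add_left[symmetric] v)
  then have k: "inner ((p - q) - (x - y)) (p - q) \<le> 0" using d1 d2 a by linarith
  have v2: "(x - p) - (y - q) = (x - y) - (p - q)" by (simp add: algebra_simps)
  have "(norm ((x - p) - (y - q)))\<^sup>2 = (norm ((x - y) - (p - q)))\<^sup>2"
    by (simp only: v2)
  also have "\<dots> = (norm (x - y))\<^sup>2 - 2 * inner (x - y) (p - q) + (norm (p - q))\<^sup>2"
    by (rule norm_diff_sq)
  finally have e: "(norm ((x - p) - (y - q)))\<^sup>2 = (norm (x - y))\<^sup>2 - 2 * inner (x - y) (p - q) + (norm (p - q))\<^sup>2" .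
  have "inner ((p - q) - (x - y)) (p - q) = (norm (p - q))\<^sup>2 - inner (x - y) (p - q)"
    by (simp add: inner_diff_left power2_norm_eq_inner)
  then show ?thesis using e k by linarith
qed

lemma proj_firm:
  fixes C :: "'a::{real_inner,complete_space} set"
  assumes "closed C" "convex C" "C \<noteq> {}"
  shows "(norm (metric_proj C x - metric_proj C y))\<^sup>2
          + (norm ((x - metric_proj C x) - (y - metric_proj C y)))\<^sup>2 \<le> (norm (x - y))\<^sup>2"
  by (rule firm_aux[OF proj_dot[OF assms(1,2) proj_in[OF assms]] proj_dot[OF assms(1,2) proj_in[OF assms]]])

lemma proj_nonexp:
  fixes C :: "'a::{real_inner,complete_space} set"
  assumes "closed C" "convex C" "C \<noteq> {}"
  shows "norm (metric_proj C x - metric_proj C y) \<le> norm (x - y)"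
proof -
  have F: "(norm (metric_proj C x - metric_proj C y))\<^sup>2
          + (norm ((x - metric_proj C x) - (y - metric_proj C y)))\<^sup>2 \<le> (norm (x - y))\<^sup>2"
    by (rule proj_firm[OF assms])
  have "(norm (metric_proj C x - metric_proj C y))\<^sup>2 \<le> (norm (metric_proj C x - metric_proj C y))\<^sup>2
          + (norm ((x - metric_proj C x) - (y - metric_proj C y)))\<^sup>2" by simp
  then have "(norm (metric_proj C x - metric_proj C y))\<^sup>2 \<le> (norm (x - y))\<^sup>2" using F by (rule order_trans)
  then show ?thesis by (rule power2_le_imp_le) simp
qed



lemma infdist_shift:
  fixes S :: "'a::real_normed_vector set"
  shows "infdist x ((\<lambda>b. b - c) ` S) = infdist (x + c) S"
proof (cases "S = {}")
  case True then show ?thesis by (simp add: infdist_def)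
next
  case False
  have "(\<lambda>a. dist x a) ` (\<lambda>b. b - c) ` S = (\<lambda>b. dist (x + c) b) ` S"
    by (auto simp: image_image dist_norm algebra_simps)
  then show ?thesis using False unfolding infdist_def by auto
qed

lemma set_diff_eq: "set_diff_minkowski B A = (\<Union>x\<in> B. \<Union>y \<in> A. {x - y})"
  unfolding set_diff_minkowski_def by auto

locale prob =
  fixes A B :: "'a::{real_inner,complete_space} set"
  assumes clA: "closed A" and cvA: "convex A" and neA: "A \<noteq> {}"
      and clB: "closed B" and cvB: "convex B" and neB: "B \<noteq> {}"
      and neE: "near_A A B \<noteq> {}"
begin

abbreviation "v \<equiv> gap_vector A B"
abbreviation "dd \<equiv> set_dist A B"
abbreviation "E \<equiv> near_A A B"
abbreviation "F \<equiv> near_B A B"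

lemma d_le_infdist: "a \<in> A \<Longrightarrow> dd \<le> infdist a B"
  unfolding set_dist_def by (rule cINF_lower) (auto intro!: bdd_belowI[of _ 0] infdist_nonneg)

lemma d_le: "a \<in> A \<Longrightarrow> b \<in> B \<Longrightarrow> dd \<le> norm (b - a)"
  using d_le_infdist[of a] infdist_le[of b B a] by (simp add: dist_norm norm_minus_commute)

lemma d_nonneg: "0 \<le> dd"
  unfolding set_dist_def by (rule cINF_greatest[OF neA]) (rule infdist_nonneg)

lemma v_prop: "e \<in> E \<Longrightarrow> metric_proj B e - e = v"
proof -
  assume e: "e \<in> E"
  then have eA: "e \<in> A" and ed: "infdist e B = dd" unfolding near_A_def by auto
  define f where "f = metric_proj B e"
  have fB: "f \<in> B" unfolding f_def by (rule proj_in[OF clB cvB neB])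
  have nf: "norm (f - e) = dd" using proj_infdist[OF clB cvB neB, of e] ed
    unfolding f_def by (simp add: dist_norm norm_minus_commute)
  define S where "S = closure (set_diff_minkowski B A)"
  have sub: "set_diff_minkowski B A \<subseteq> {w. dd \<le> norm w}"
    unfolding set_diff_minkowski_def using d_le by auto
  have "closed {w::'a. dd \<le> norm w}" by (intro closed_Collect_le continuous_intros)
  then have Sd: "\<forall>w\<in>S. dd \<le> norm w" unfolding S_def using closure_minimal[OF sub] by blast
  have feS: "f - e \<in> S" unfolding S_def set_diff_minkowski_def using fB eA
    by (intro closure_subset[THEN subsetD]) blast
  have cvS: "convex S" unfolding S_def set_diff_eq by (intro convex_closure convex_differences cvA cvB)
  have "metric_proj S 0 = f - e"
    by (rule proj_unique[OF _ cvS feS]) (use Sd nf in \<open>auto simp: S_def dist_norm norm_minus_commute[of e f]\<close>)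
  then show ?thesis unfolding gap_vector_def S_def f_def by simp
qed

lemma v_norm: "norm v = dd"
proof -
  obtain e where e: "e \<in> E" using neE by blast
  then have eA: "e \<in> A" and ed: "infdist e B = dd" unfolding near_A_def by auto
  have "norm (metric_proj B e - e) = dd" using proj_infdist[OF clB cvB neB, of e] ed
    by (simp add: dist_norm norm_minus_commute)
  then show ?thesis using v_prop[OF e] by simp
qed

lemma E_char: "e \<in> E \<longleftrightarrow> e \<in> A \<and> e + v \<in> B"
proof
  assume e: "e \<in> E"
  then show "e \<in> A \<and> e + v \<in> B" using v_prop[OF e] proj_in[OF clB cvB neB, of e]
    unfolding near_A_def by (auto simp: algebra_simps)
next
  assume h: "e \<in> A \<and> e + v \<in> B"
  have "infdist e B \<le> dist e (e + v)" using h infdist_le by blast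
  also have "\<dots> = dd" using v_norm by (simp add: dist_norm)
  finally have "infdist e B \<le> dd" .
  then show "e \<in> E" using h d_le_infdist[of e] unfolding near_A_def by auto
qed

lemma PB_E: "e \<in> E \<Longrightarrow> metric_proj B e = e + v"
  using v_prop by (metis add.commute diff_add_cancel)

lemma PA_F: "e \<in> E \<Longrightarrow> metric_proj A (e + v) = e"
proof -
  assume e: "e \<in> E"
  then have eA: "e \<in> A" and fB: "e + v \<in> B" using E_char by auto
  show ?thesis
  proof (rule proj_unique[OF clA cvA eA], intro ballI)
    fix z assume z: "z \<in> A"
    have "dist (e + v) e = dd" using v_norm by (simp add: dist_norm)
    also have "\<dots> \<le> norm ((e + v) - z)" using d_le[OF z fB] .
    finally show "dist (e + v) e \<le> dist (e + v) z" by (simp add: dist_norm)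
  qed
qed

lemma F_of_E: "e \<in> E \<Longrightarrow> e + v \<in> F"
proof -
  assume e: "e \<in> E"
  then have eA: "e \<in> A" and fB: "e + v \<in> B" using E_char by auto
  have "infdist (e + v) A \<le> dist (e + v) e" using eA infdist_le by blast
  also have "\<dots> = dd" using v_norm by (simp add: dist_norm)
  finally have "infdist (e + v) A \<le> dd" .
  moreover have "dd \<le> infdist (e + v) A"
    by (rule infdist_geI[OF neA]) (use d_le[OF _ fB] in \<open>simp add: dist_norm\<close>)
  ultimately show ?thesis using fB unfolding near_B_def by auto
qed

lemma regular_use:
  assumes "regular_couple A B" "\<epsilon> > 0"
  obtains \<delta> where "\<delta> > 0" "\<And>x. infdist x A \<le> \<delta> \<Longrightarrow> infdist (x + v) B \<le> \<delta> \<Longrightarrow> infdist x E \<le> \<epsilon>"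
proof -
  obtain \<delta> where "\<delta> > 0" and h: "\<forall>x. max (infdist x A) (infdist x ((\<lambda>b. b - v) ` B)) \<le> \<delta>
        \<longrightarrow> infdist x E \<le> \<epsilon>" using assms unfolding regular_couple_def by blast
  then show ?thesis using that[of \<delta>] by (simp add: infdist_shift)
qed

end


lemma excess_ge:
  fixes C D :: "'a::real_normed_vector set"
  assumes "x \<in> C" "norm x \<le> real N"
  shows "infdist x D \<le> aw_excess N C D"
proof -
  have xin: "x \<in> C \<inter> cball 0 (real N)" using assms by (simp add: dist_norm)
  have "bdd_above ((\<lambda>c. infdist c D) ` (C \<inter> cball 0 (real N)))"
  proof (rule bdd_aboveI[of _ "infdist 0 D + real N"])
    fix y assume "y \<in> (\<lambda>c. infdist c D) ` (C \<inter> cball 0 (real N))"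
    then obtain c where c: "c \<in> cball 0 (real N)" "y = infdist c D" by auto
    have "infdist c D \<le> infdist 0 D + dist c 0" by (rule infdist_triangle)
    then show "y \<le> infdist 0 D + real N" using c by (simp add: dist_norm)
  qed
  then have "infdist x D \<le> (SUP c\<in>C \<inter> cball 0 (real N). infdist c D)"
    using xin by (rule cSUP_upper2) simp
  then show ?thesis using xin unfolding aw_excess_def by auto
qed

lemma aw_eventually:
  fixes C :: "'a::real_normed_vector set"
  assumes "aw_converges Cs C" "\<epsilon> > 0"
  shows "eventually (\<lambda>n. (\<forall>x\<in>Cs n. norm x \<le> R \<longrightarrow> infdist x C \<le> \<epsilon>)
                         \<and> (\<forall>x\<in>C. norm x \<le> R \<longrightarrow> infdist x (Cs n) \<le> \<epsilon>)) sequentially"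
proof -
  define N where "N = max 1 (nat \<lceil>R\<rceil>)"
  have N1: "N \<ge> 1" unfolding N_def by simp
  have "R \<le> real (nat \<lceil>R\<rceil>)" by (rule real_nat_ceiling_ge)
  moreover have "real (nat \<lceil>R\<rceil>) \<le> real N" unfolding N_def by simp
  ultimately have RN: "R \<le> real N" by linarith
  have "(\<lambda>j. aw_h N (Cs j) C) \<longlonglongrightarrow> 0" using assms(1) N1 unfolding aw_converges_def by blast
  then have ev: "eventually (\<lambda>j. aw_h N (Cs j) C < \<epsilon>) sequentially"
    using assms(2) by (rule order_tendstoD(2))
  show ?thesis
  proof (rule eventually_mono[OF ev], intro conjI ballI impI)
    fix n x assume h: "aw_h N (Cs n) C < \<epsilon>"
    { assume x: "x \<in> Cs n" "norm x \<le> R"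
      have "infdist x C \<le> aw_excess N (Cs n) C" using excess_ge[OF x(1)] x(2) RN by auto
      then show "infdist x C \<le> \<epsilon>" using h unfolding aw_h_def by auto }
    { assume x: "x \<in> C" "norm x \<le> R"
      have "infdist x (Cs n) \<le> aw_excess N C (Cs n)" using excess_ge[OF x(1)] x(2) RN by auto
      then show "infdist x (Cs n) \<le> \<epsilon>" using h unfolding aw_h_def by auto }
  qed
qed


lemma real_aux1:
  fixes a K s \<eta> \<epsilon> :: real
  assumes "0 \<le> a" "a \<le> K" "0 \<le> s" "a\<^sup>2 + s\<^sup>2 \<le> (a + 4 * \<eta>)\<^sup>2" "0 < \<eta>" "\<eta> \<le> 1"
    "\<eta> \<le> \<epsilon>\<^sup>2 / (32 * (K + 2))" "\<epsilon> > 0"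
  shows "s \<le> \<epsilon> / 2"
proof -
  have K0: "K \<ge> 0" using assms(1,2) by linarith
  have e1: "(a + 4 * \<eta>)\<^sup>2 = a\<^sup>2 + (8 * \<eta> * a + 16 * (\<eta> * \<eta>))" by (simp add: power2_eq_square algebra_simps)
  have s1: "s\<^sup>2 \<le> 8 * \<eta> * a + 16 * (\<eta> * \<eta>)" using assms(4) unfolding e1 by simp
  have h1: "8 * \<eta> * a \<le> 8 * \<eta> * K" using assms by (intro mult_left_mono) auto
  have h2: "\<eta> * \<eta> \<le> \<eta>" using assms(5,6) by (simp add: mult_le_cancel_left1)
  have h3: "\<eta> * (8 * (K + 2)) \<le> (\<epsilon>\<^sup>2 / (32 * (K + 2))) * (8 * (K + 2))"
    using assms(7) K0 by (intro mult_right_mono) auto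
  have h4: "(\<epsilon>\<^sup>2 / (32 * (K + 2))) * (8 * (K + 2)) = \<epsilon>\<^sup>2 / 4" using K0 by (simp add: field_simps)
  have h5: "(\<epsilon> / 2)\<^sup>2 = \<epsilon>\<^sup>2 / 4" by (simp add: power_divide)
  have "s\<^sup>2 \<le> 8 * \<eta> * a + 16 * (\<eta> * \<eta>)" by (rule s1)
  also have "\<dots> \<le> 8 * \<eta> * K + 16 * \<eta>" using h1 h2 by linarith
  also have "\<dots> = \<eta> * (8 * (K + 2))" by (simp add: algebra_simps)
  also have "\<dots> \<le> (\<epsilon>\<^sup>2 / (32 * (K + 2))) * (8 * (K + 2))" by (rule h3)
  also have "\<dots> = (\<epsilon> / 2)\<^sup>2" unfolding h4 h5 ..
  finally have "s\<^sup>2 \<le> (\<epsilon> / 2)\<^sup>2" .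
  then show ?thesis by (rule power2_le_imp_le) (use assms(8) in simp)
qed

lemma proj_conv:
  fixes C :: "'a::{real_inner,complete_space} set"
  assumes C: "closed C" "convex C" "C \<noteq> {}"
      and Cs: "\<forall>n\<ge>1. closed (Cs n) \<and> convex (Cs n) \<and> Cs n \<noteq> {}"
      and aw: "aw_converges Cs C" and ep: "\<epsilon> > 0"
  shows "eventually (\<lambda>n. \<forall>y. norm y \<le> R \<longrightarrow> norm (metric_proj (Cs n) y - metric_proj C y) \<le> \<epsilon>) sequentially"
proof -
  obtain c0 where c0: "c0 \<in> C" using C(3) by blast
  define K0 where "K0 = \<bar>R\<bar> + norm c0"
  define R1 where "R1 = \<bar>R\<bar> + K0"
  define R2 where "R2 = \<bar>R\<bar> + K0 + 2"
  define \<eta> where "\<eta> = min 1 (min (\<epsilon>/4) (\<epsilon>\<^sup>2 / (32 * (K0 + 2))))"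
  have K0: "K0 \<ge> 0" unfolding K0_def by simp
  have eta1: "\<eta> > 0" unfolding \<eta>_def using ep K0 by auto
  have eta: "\<eta> > 0" "\<eta> \<le> 1" "\<eta> \<le> \<epsilon>/4" "\<eta> \<le> \<epsilon>\<^sup>2 / (32 * (K0 + 2))"
    using eta1 unfolding \<eta>_def by (simp_all only: min.coboundedI1 min.coboundedI2 order_refl min.cobounded1)
  have ev1: "eventually (\<lambda>n. \<forall>x\<in>C. norm x \<le> R1 \<longrightarrow> infdist x (Cs n) \<le> \<eta>) sequentially"
    using aw_eventually[OF aw eta(1), of R1] by (rule eventually_mono) blast
  have ev2: "eventually (\<lambda>n. \<forall>x\<in>Cs n. norm x \<le> R2 \<longrightarrow> infdist x C \<le> \<eta>) sequentially"
    using aw_eventually[OF aw eta(1), of R2] by (rule eventually_mono) blast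
  have ev3: "eventually (\<lambda>n. n \<ge> 1) sequentially" by (rule eventually_ge_at_top)
  show ?thesis
  proof (rule eventually_mono[OF eventually_conj[OF ev1 eventually_conj[OF ev2 ev3]]], intro allI impI)
    fix n :: nat and y :: 'a
    assume h: "(\<forall>x\<in>C. norm x \<le> R1 \<longrightarrow> infdist x (Cs n) \<le> \<eta>) \<and>
               (\<forall>x\<in>Cs n. norm x \<le> R2 \<longrightarrow> infdist x C \<le> \<eta>) \<and> 1 \<le> n"
      and y: "norm y \<le> R"
    have Cn: "closed (Cs n)" "convex (Cs n)" "Cs n \<noteq> {}" using Cs h by auto
    define p where "p = metric_proj C y"
    define pn where "pn = metric_proj (Cs n) y"
    have pC: "p \<in> C" unfolding p_def by (rule proj_in[OF C])
    have pnC: "pn \<in> Cs n" unfolding pn_def by (rule proj_in[OF Cn])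
    have yp: "norm (y - p) \<le> K0"
    proof -
      have "dist y p \<le> dist y c0" unfolding p_def by (rule proj_le[OF C(1,2) c0])
      also have "\<dots> \<le> norm y + norm c0" by (simp add: dist_norm norm_triangle_ineq4)
      finally show ?thesis using y unfolding K0_def by (simp add: dist_norm)
    qed
    have np: "norm p \<le> R1"
    proof -
      have "norm (y - (y - p)) \<le> norm y + norm (y - p)" by (rule norm_triangle_ineq4)
      then have "norm p \<le> norm y + norm (y - p)" by simp
      then show ?thesis using y yp unfolding R1_def by linarith
    qed
    have "infdist p (Cs n) \<le> \<eta>" using h np pC by blast
    then have "infdist p (Cs n) < 2 * \<eta>" using eta(1) by linarith
    then obtain q where qC: "q \<in> Cs n" and pq: "dist p q < 2 * \<eta>" using infdist_lessE[OF Cn(3)] by blast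
    have ypn: "norm (y - pn) \<le> norm (y - p) + 2 * \<eta>"
    proof -
      have "dist y pn \<le> dist y q" unfolding pn_def by (rule proj_le[OF Cn(1,2) qC])
      also have "\<dots> \<le> dist y p + dist p q" by (rule dist_triangle)
      finally show ?thesis using pq by (simp add: dist_norm)
    qed
    have npn: "norm pn \<le> R2"
    proof -
      have "norm (y - (y - pn)) \<le> norm y + norm (y - pn)" by (rule norm_triangle_ineq4)
      then have "norm pn \<le> norm y + norm (y - pn)" by simp
      then show ?thesis using y yp ypn eta unfolding R2_def by linarith
    qed
    have "infdist pn C \<le> \<eta>" using h npn pnC by blast
    then have "infdist pn C < 2 * \<eta>" using eta(1) by linarith
    then obtain q' where q'C: "q' \<in> C" and pq': "dist pn q' < 2 * \<eta>" using infdist_lessE[OF C(3)] by blast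
    have yq': "norm (y - q') \<le> norm (y - p) + 4 * \<eta>"
    proof -
      have "dist y q' \<le> dist y pn + dist pn q'" by (rule dist_triangle)
      then show ?thesis using pq' ypn by (simp add: dist_norm)
    qed
    have py: "(norm (y - p))\<^sup>2 + (norm (p - q'))\<^sup>2 \<le> (norm (y - q'))\<^sup>2"
      unfolding p_def by (rule proj_pyth[OF C(1,2) q'C])
    have "(norm (y - q'))\<^sup>2 \<le> (norm (y - p) + 4 * \<eta>)\<^sup>2"
      using yq' by (rule power_mono) simp
    with py have "(norm (y - p))\<^sup>2 + (norm (p - q'))\<^sup>2 \<le> (norm (y - p) + 4 * \<eta>)\<^sup>2" by (rule order_trans)
    then have pq'2: "norm (p - q') \<le> \<epsilon> / 2"
      by (rule real_aux1[OF norm_ge_zero yp norm_ge_zero _ eta(1,2,4) ep])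
    have "norm (pn - p) \<le> norm (pn - q') + norm (q' - p)" using norm_triangle_ineq[of "pn - q'" "q' - p"] by simp
    also have "\<dots> \<le> 2 * \<eta> + \<epsilon> / 2" using pq' pq'2 norm_minus_commute[of q' p] unfolding dist_norm by linarith
    also have "\<dots> \<le> \<epsilon>" using eta by linarith
    finally show "norm (metric_proj (Cs n) y - metric_proj C y) \<le> \<epsilon>" unfolding pn_def p_def .
  qed
qed



lemma cc_upper:
  fixes a b :: "'a::real_normed_vector"
  assumes "0 \<le> t" "t \<le> 1" "norm a \<le> \<alpha>"
  shows "norm ((1 - t) *\<^sub>R a + t *\<^sub>R b) \<le> \<alpha> + t * norm b"
proof -
  have "norm ((1 - t) *\<^sub>R a + t *\<^sub>R b) \<le> norm ((1 - t) *\<^sub>R a) + norm (t *\<^sub>R b)" by (rule norm_triangle_ineq)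
  also have "\<dots> = (1 - t) * norm a + t * norm b" using assms(1,2) by simp
  also have "(1 - t) * norm a \<le> norm a" using assms(1,2) by (simp add: mult_left_le_one_le)
  then have "(1 - t) * norm a + t * norm b \<le> \<alpha> + t * norm b" using assms(3) by linarith
  finally show ?thesis .
qed

lemma cc_lower:
  fixes a b :: "'a::real_normed_vector"
  assumes "0 \<le> t" "t \<le> 1" "norm a \<le> \<alpha>"
  shows "t * norm b - \<alpha> \<le> norm ((1 - t) *\<^sub>R a + t *\<^sub>R b)"
proof -
  have "norm (t *\<^sub>R b) \<le> norm ((1 - t) *\<^sub>R a + t *\<^sub>R b) + norm ((1 - t) *\<^sub>R a)"
    using norm_triangle_ineq4[of "(1 - t) *\<^sub>R a + t *\<^sub>R b" "(1 - t) *\<^sub>R a"] by simp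
  moreover have "norm (t *\<^sub>R b) = t * norm b" using assms(1) by simp
  moreover have "norm ((1 - t) *\<^sub>R a) = (1 - t) * norm a" using assms(2) by simp
  moreover have "(1 - t) * norm a \<le> norm a" using assms(1,2) by (simp add: mult_left_le_one_le)
  ultimately show ?thesis using assms(3) by linarith
qed

locale iter = prob +
  fixes As Bs :: "nat \<Rightarrow> 'a set" and a b :: "nat \<Rightarrow> 'a"
  assumes sets_ok: "\<forall>n\<ge>1. closed (As n) \<and> convex (As n) \<and> As n \<noteq> {}
                    \<and> closed (Bs n) \<and> convex (Bs n) \<and> Bs n \<noteq> {}"
      and awA: "aw_converges As A" and awB: "aw_converges Bs B"
      and recur: "\<forall>n\<ge>1. b n = metric_proj (Bs n) (a (n - 1)) \<and> a n = metric_proj (As n) (b n)"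
      and bdE: "bounded E"
      and reg: "regular_couple A B"
begin

definition "e0 = (SOME e. e \<in> E)"
abbreviation "f0 \<equiv> e0 + v"

lemma e0E: "e0 \<in> E" unfolding e0_def using neE by (simp add: some_in_eq)

lemma As_ok: "n \<ge> 1 \<Longrightarrow> closed (As n) \<and> convex (As n) \<and> As n \<noteq> {}" using sets_ok by blast
lemma Bs_ok: "n \<ge> 1 \<Longrightarrow> closed (Bs n) \<and> convex (Bs n) \<and> Bs n \<noteq> {}" using sets_ok by blast

lemma b_Suc: "b (Suc n) = metric_proj (Bs (Suc n)) (a n)" using recur by auto
lemma a_Suc: "a (Suc n) = metric_proj (As (Suc n)) (b (Suc n))" using recur by auto

lemma a_in: "n \<ge> 1 \<Longrightarrow> a n \<in> As n"
  using recur As_ok[of n] proj_in by metis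
lemma b_in: "n \<ge> 1 \<Longrightarrow> b n \<in> Bs n"
  using recur Bs_ok[of n] proj_in by metis

lemma D_bound: obtains D where "D \<ge> 0" "\<And>e. e \<in> E \<Longrightarrow> norm (e - e0) \<le> D"
proof -
  obtain K where K: "\<forall>x\<in>E. norm x \<le> K" using bdE unfolding bounded_iff by blast
  have "norm (e - e0) \<le> max 0 (K + norm e0)" if "e \<in> E" for e
  proof -
    have "norm (e - e0) \<le> norm e + norm e0" by (rule norm_triangle_ineq4)
    then show ?thesis using K that by fastforce
  qed
  then show ?thesis using that[of "max 0 (K + norm e0)"] by simp
qed

lemma ev_z: "\<eta> > 0 \<Longrightarrow> eventually (\<lambda>n. norm (metric_proj (As n) f0 - e0) \<le> \<eta>) sequentially"
proof -
  assume "\<eta> > 0"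
  from proj_conv[OF clA cvA neA _ awA this, of "norm f0"] sets_ok
  have "eventually (\<lambda>n. \<forall>y. norm y \<le> norm f0 \<longrightarrow> norm (metric_proj (As n) y - metric_proj A y) \<le> \<eta>) sequentially"
    by blast
  then show ?thesis by (rule eventually_mono) (use PA_F[OF e0E] in auto)
qed

lemma ev_w: "\<eta> > 0 \<Longrightarrow> eventually (\<lambda>n. norm (metric_proj (Bs n) e0 - f0) \<le> \<eta>) sequentially"
proof -
  assume "\<eta> > 0"
  from proj_conv[OF clB cvB neB _ awB this, of "norm e0"] sets_ok
  have "eventually (\<lambda>n. \<forall>y. norm y \<le> norm e0 \<longrightarrow> norm (metric_proj (Bs n) y - metric_proj B y) \<le> \<eta>) sequentially"
    by blast
  then show ?thesis by (rule eventually_mono) (use PB_E[OF e0E] in auto)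
qed

lemma claimC:
  obtains c R0 where "0 < c" "c \<le> 1" "0 < R0"
    "eventually (\<lambda>n. \<forall>x\<in>As n. \<forall>y\<in>Bs (Suc n). R0 \<le> norm (x - e0) \<longrightarrow> c * norm (x - e0) \<le> norm (x + v - y)) sequentially"
proof -
  obtain \<delta>1 where d1: "\<delta>1 > 0" and reg1: "\<And>x. infdist x A \<le> \<delta>1 \<Longrightarrow> infdist (x + v) B \<le> \<delta>1 \<Longrightarrow> infdist x E \<le> 1"
    using regular_use[OF reg, of 1] by auto
  obtain D where D0: "D \<ge> 0" and DE: "\<And>e. e \<in> E \<Longrightarrow> norm (e - e0) \<le> D" using D_bound by blast
  define R0 where "R0 = D + 2"
  define c where "c = min (\<delta>1 / (2 * R0)) 1"
  define \<eta> where "\<eta> = min (1/2) (\<delta>1 / 8)"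
  define M where "M = norm e0 + norm v + R0 + 2 + \<delta>1"
  have R0: "R0 > 0" unfolding R0_def using D0 by simp
  have c0: "c > 0" "c \<le> 1" unfolding c_def using d1 R0 by auto
  have cR0: "c * R0 \<le> \<delta>1 / 2"
  proof -
    have "c \<le> \<delta>1 / (2 * R0)" unfolding c_def by simp
    then have "c * R0 \<le> \<delta>1 / (2 * R0) * R0" using R0 by (intro mult_right_mono) auto
    also have "\<dots> = \<delta>1 / 2" using R0 by simp
    finally show ?thesis .
  qed
  have eta0: "\<eta> > 0" unfolding \<eta>_def using d1 by simp
  have eta1: "\<eta> \<le> 1/2" unfolding \<eta>_def by simp
  have eta2: "\<eta> \<le> \<delta>1 / 8" unfolding \<eta>_def by simp
  have evz: "eventually (\<lambda>n. norm (metric_proj (As n) f0 - e0) \<le> \<eta>) sequentially" by (rule ev_z[OF eta0])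
  have evw: "eventually (\<lambda>n. norm (metric_proj (Bs (Suc n)) e0 - f0) \<le> \<eta>) sequentially"
    using ev_w[OF eta0] by (subst eventually_sequentially_Suc[of "\<lambda>n. norm (metric_proj (Bs n) e0 - f0) \<le> \<eta>"])
  have evA: "eventually (\<lambda>n. \<forall>x\<in>As n. norm x \<le> M \<longrightarrow> infdist x A \<le> \<delta>1) sequentially"
    using aw_eventually[OF awA d1, of M] by (rule eventually_mono) blast
  have d14: "\<delta>1 / 4 > 0" using d1 by simp
  have evB0: "eventually (\<lambda>n. \<forall>x\<in>Bs n. norm x \<le> M \<longrightarrow> infdist x B \<le> \<delta>1 / 4) sequentially"
    using aw_eventually[OF awB d14, of M] by (rule eventually_mono) blast
  have evB: "eventually (\<lambda>n. \<forall>x\<in>Bs (Suc n). norm x \<le> M \<longrightarrow> infdist x B \<le> \<delta>1 / 4) sequentially"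
    using evB0 by (subst eventually_sequentially_Suc[of "\<lambda>n. \<forall>x\<in>Bs n. norm x \<le> M \<longrightarrow> infdist x B \<le> \<delta>1 / 4"])
  have ev1: "eventually (\<lambda>n. n \<ge> 1) sequentially" by (rule eventually_ge_at_top)
  have main: "c * norm (x - e0) \<le> norm (x + v - y)"
    if n1: "n \<ge> 1" and hz: "norm (metric_proj (As n) f0 - e0) \<le> \<eta>"
      and hw: "norm (metric_proj (Bs (Suc n)) e0 - f0) \<le> \<eta>"
      and hA: "\<forall>x\<in>As n. norm x \<le> M \<longrightarrow> infdist x A \<le> \<delta>1"
      and hB: "\<forall>x\<in>Bs (Suc n). norm x \<le> M \<longrightarrow> infdist x B \<le> \<delta>1 / 4"
      and x: "x \<in> As n" and y: "y \<in> Bs (Suc n)" and r: "R0 \<le> norm (x - e0)"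
    for n x y
  proof (rule ccontr)
    assume "\<not> ?thesis"
    then have lt: "norm (x + v - y) < c * norm (x - e0)" by simp
    define r where "r = norm (x - e0)"
    define z where "z = metric_proj (As n) f0"
    define w where "w = metric_proj (Bs (Suc n)) e0"
    have An: "closed (As n)" "convex (As n)" "As n \<noteq> {}" using As_ok[OF n1] by auto
    have Bn: "closed (Bs (Suc n))" "convex (Bs (Suc n))" "Bs (Suc n) \<noteq> {}" using Bs_ok[of "Suc n"] by auto
    have zA: "z \<in> As n" unfolding z_def by (rule proj_in[OF An])
    have wB: "w \<in> Bs (Suc n)" unfolding w_def by (rule proj_in[OF Bn])
    have rpos: "r > 0" using r R0 unfolding r_def by linarith
    define t where "t = R0 / r"
    have t0: "0 \<le> t" "t \<le> 1" unfolding t_def using rpos R0 r r_def by auto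
    have tr: "t * r = R0" unfolding t_def using rpos by simp
    define xt where "xt = (1 - t) *\<^sub>R z + t *\<^sub>R x"
    define yt where "yt = (1 - t) *\<^sub>R w + t *\<^sub>R y"
    have xtA: "xt \<in> As n" unfolding xt_def by (rule convexD[OF An(2) zA x]) (use t0 in auto)
    have ytB: "yt \<in> Bs (Suc n)" unfolding yt_def by (rule convexD[OF Bn(2) wB y]) (use t0 in auto)
    have id1: "xt - e0 = (1 - t) *\<^sub>R (z - e0) + t *\<^sub>R (x - e0)"
      unfolding xt_def by (simp add: algebra_simps)
    have id2: "xt + v - yt = (1 - t) *\<^sub>R ((z - e0) - (w - f0)) + t *\<^sub>R (x + v - y)"
      unfolding xt_def yt_def by (simp add: algebra_simps)
    have zn: "norm (z - e0) \<le> \<eta>" using hz unfolding z_def .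
    have wn: "norm (w - f0) \<le> \<eta>" using hw unfolding w_def .
    have zwn: "norm ((z - e0) - (w - f0)) \<le> 2 * \<eta>"
      using norm_triangle_ineq4[of "z - e0" "w - f0"] zn wn by linarith
    have lo: "R0 - \<eta> \<le> norm (xt - e0)"
      using cc_lower[OF t0 zn, of "x - e0"] tr unfolding id1 r_def by simp
    have hi: "norm (xt - e0) \<le> R0 + \<eta>"
      using cc_upper[OF t0 zn, of "x - e0"] tr unfolding id1 r_def by simp
    have "t * norm (x + v - y) \<le> t * (c * r)" using lt t0 unfolding r_def by (intro mult_left_mono) auto
    also have "\<dots> = c * R0" using tr by (simp add: algebra_simps)
    finally have tn: "t * norm (x + v - y) \<le> c * R0" .
    have gap: "norm (xt + v - yt) \<le> 2 * \<eta> + \<delta>1 / 2"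
      using cc_upper[OF t0 zwn, of "x + v - y"] tn cR0 unfolding id2 by linarith
    have nxt: "norm xt \<le> norm e0 + R0 + \<eta>"
      using hi norm_triangle_ineq2[of xt e0] by linarith
    have nxtM: "norm xt \<le> M" using nxt eta1 d1 norm_ge_zero[of v] unfolding M_def by linarith
    have "yt = (xt + v) - (xt + v - yt)" by simp
    then have "norm yt \<le> norm (xt + v) + norm (xt + v - yt)" by (metis norm_triangle_ineq4)
    moreover have "norm (xt + v) \<le> norm xt + norm v" by (rule norm_triangle_ineq)
    ultimately have nyt: "norm yt \<le> M" using nxt gap eta1 d1 unfolding M_def by linarith
    have iA: "infdist xt A \<le> \<delta>1" using hA xtA nxtM by blast
    have iB0: "infdist yt B \<le> \<delta>1 / 4" using hB ytB nyt by blast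
    have "infdist (xt + v) B \<le> infdist yt B + dist (xt + v) yt" by (rule infdist_triangle)
    then have iB: "infdist (xt + v) B \<le> \<delta>1" using iB0 gap eta2 unfolding dist_norm by linarith
    have iE: "infdist xt E \<le> 1" by (rule reg1[OF iA iB])
    have "3/2 \<le> infdist xt E"
    proof (rule infdist_geI[OF neE])
      fix e assume e: "e \<in> E"
      have "norm (xt - e0) \<le> norm (xt - e) + norm (e - e0)"
        using norm_triangle_ineq[of "xt - e" "e - e0"] by simp
      then show "3/2 \<le> dist xt e" using lo DE[OF e] eta1 unfolding R0_def dist_norm by linarith
    qed
    then show False using iE by linarith
  qed
  have "eventually (\<lambda>n. \<forall>x\<in>As n. \<forall>y\<in>Bs (Suc n). R0 \<le> norm (x - e0) \<longrightarrow> c * norm (x - e0) \<le> norm (x + v - y)) sequentially"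
    using eventually_conj[OF ev1 eventually_conj[OF evz eventually_conj[OF evw eventually_conj[OF evA evB]]]]
    by (rule eventually_mono) (use main in blast)
  then show ?thesis using that c0 R0 by blast
qed

end


lemma real_aux2:
  fixes r c X Y :: real
  assumes "0 \<le> r" "0 < c" "c \<le> 1" "X\<^sup>2 + Y\<^sup>2 \<le> r\<^sup>2" "c * r / 2 \<le> Y" "0 \<le> X"
  shows "X \<le> r * (1 - c\<^sup>2 / 8)"
proof -
  define k where "k = c\<^sup>2 / 8"
  have k0: "0 \<le> k" "k \<le> 1/8" unfolding k_def using assms(2,3) by (auto simp: power_le_one)
  have "0 \<le> c * r / 2" using assms by simp
  then have Y2: "(c * r / 2)\<^sup>2 \<le> Y\<^sup>2" by (rule power_mono[OF assms(5)])
  have e: "(c * r / 2)\<^sup>2 = r\<^sup>2 * (2 * k)" unfolding k_def by (simp add: power2_eq_square field_simps)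
  have "X\<^sup>2 \<le> r\<^sup>2 - Y\<^sup>2" using assms(4) by simp
  also have "\<dots> \<le> r\<^sup>2 - r\<^sup>2 * (2 * k)" using Y2 unfolding e by simp
  also have "\<dots> = r\<^sup>2 * (1 - 2 * k)" by (simp add: algebra_simps)
  also have "\<dots> \<le> r\<^sup>2 * (1 - k)\<^sup>2"
  proof (rule mult_left_mono)
    show "1 - 2 * k \<le> (1 - k)\<^sup>2" by (simp add: power2_eq_square algebra_simps)
  qed simp
  also have "\<dots> = (r * (1 - k))\<^sup>2" by (simp add: power_mult_distrib)
  finally have "X\<^sup>2 \<le> (r * (1 - k))\<^sup>2" .
  then have "X \<le> r * (1 - k)" by (rule power2_le_imp_le) (use assms(1) k0 in simp)
  then show ?thesis unfolding k_def .
qed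

lemma ntri:
  fixes x y z :: "'a::real_normed_vector"
  shows "norm (x - z) \<le> norm (x - y) + norm (y - z)"
  using norm_triangle_ineq[of "x - y" "y - z"] by simp

lemma ntri2:
  fixes p q :: "'a::real_normed_vector"
  shows "norm p \<le> norm (p + q) + norm q"
  using norm_triangle_ineq4[of "p + q" q] by simp

context iter begin

lemma bounded_a: obtains K where "\<And>n. norm (a n - e0) \<le> K"
proof -
  obtain c R0 where c: "0 < c" "c \<le> 1" and R0: "0 < R0" and evC:
    "eventually (\<lambda>n. \<forall>x\<in>As n. \<forall>y\<in>Bs (Suc n). R0 \<le> norm (x - e0) \<longrightarrow> c * norm (x - e0) \<le> norm (x + v - y)) sequentially"
    using claimC by blast
  define k where "k = c\<^sup>2 / 8"
  define \<eta> where "\<eta> = min 1 (min (c * R0 / 2) (k * R0 / 2))"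
  have k0: "k > 0" unfolding k_def using c by simp
  have eta: "\<eta> > 0" "\<eta> \<le> 1" "\<eta> \<le> c * R0 / 2" "\<eta> \<le> k * R0 / 2"
    unfolding \<eta>_def using c R0 k0 by auto
  have evz: "eventually (\<lambda>n. norm (metric_proj (As (Suc n)) f0 - e0) \<le> \<eta>) sequentially"
    using ev_z[OF eta(1)] by (subst eventually_sequentially_Suc[of "\<lambda>n. norm (metric_proj (As n) f0 - e0) \<le> \<eta>"])
  have evw: "eventually (\<lambda>n. norm (metric_proj (Bs (Suc n)) e0 - f0) \<le> \<eta>) sequentially"
    using ev_w[OF eta(1)] by (subst eventually_sequentially_Suc[of "\<lambda>n. norm (metric_proj (Bs n) e0 - f0) \<le> \<eta>"])
  have ev1: "eventually (\<lambda>n. n \<ge> 1) sequentially" by (rule eventually_ge_at_top)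
  obtain N1 where N1: "\<And>n. n \<ge> N1 \<Longrightarrow> (n \<ge> 1 \<and> norm (metric_proj (As (Suc n)) f0 - e0) \<le> \<eta>
      \<and> norm (metric_proj (Bs (Suc n)) e0 - f0) \<le> \<eta>
      \<and> (\<forall>x\<in>As n. \<forall>y\<in>Bs (Suc n). R0 \<le> norm (x - e0) \<longrightarrow> c * norm (x - e0) \<le> norm (x + v - y)))"
    using eventually_conj[OF ev1 eventually_conj[OF evz eventually_conj[OF evw evC]]]
    unfolding eventually_sequentially by blast
  define r where "r n = norm (a n - e0)" for n
  have step: "r (Suc n) \<le> max (r n) (R0 + 2)" if n: "n \<ge> N1" for n
  proof -
    have n1: "n \<ge> 1" and hz: "norm (metric_proj (As (Suc n)) f0 - e0) \<le> \<eta>"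
      and hw: "norm (metric_proj (Bs (Suc n)) e0 - f0) \<le> \<eta>"
      and hC: "\<forall>x\<in>As n. \<forall>y\<in>Bs (Suc n). R0 \<le> norm (x - e0) \<longrightarrow> c * norm (x - e0) \<le> norm (x + v - y)"
      using N1[OF n] by auto
    have A': "closed (As (Suc n))" "convex (As (Suc n))" "As (Suc n) \<noteq> {}" using As_ok[of "Suc n"] by auto
    have B': "closed (Bs (Suc n))" "convex (Bs (Suc n))" "Bs (Suc n) \<noteq> {}" using Bs_ok[of "Suc n"] by auto
    define x where "x = a n"
    define x1 where "x1 = b (Suc n)"
    define x2 where "x2 = a (Suc n)"
    define z where "z = metric_proj (As (Suc n)) f0"
    define w where "w = metric_proj (Bs (Suc n)) e0"
    have x1d: "x1 = metric_proj (Bs (Suc n)) x" unfolding x1_def x_def by (rule b_Suc)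
    have x2d: "x2 = metric_proj (As (Suc n)) x1" unfolding x2_def x1_def by (rule a_Suc)
    have xA: "x \<in> As n" unfolding x_def by (rule a_in[OF n1])
    have x1B: "x1 \<in> Bs (Suc n)" unfolding x1d by (rule proj_in[OF B'])
    have zn: "norm (z - e0) \<le> \<eta>" using hz unfolding z_def .
    have wn: "norm (w - f0) \<le> \<eta>" using hw unfolding w_def .
    have F1: "(norm (x1 - w))\<^sup>2 + (norm ((x - x1) - (e0 - w)))\<^sup>2 \<le> (norm (x - e0))\<^sup>2"
      unfolding x1d w_def by (rule proj_firm[OF B'])
    have F2: "norm (x2 - z) \<le> norm (x1 - f0)" unfolding x2d z_def by (rule proj_nonexp[OF A'])
    have F3: "norm (x1 - w) \<le> norm (x - e0)" unfolding x1d w_def by (rule proj_nonexp[OF B'])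
    have t1: "norm (x2 - e0) \<le> norm (x2 - z) + norm (z - e0)"
      using norm_triangle_ineq[of "x2 - z" "z - e0"] by simp
    have t2: "norm (x1 - f0) \<le> norm (x1 - w) + norm (w - f0)" by (rule ntri)
    have r': "r (Suc n) \<le> norm (x1 - w) + 2 * \<eta>"
      using t1 t2 F2 zn wn unfolding r_def x2_def[symmetric] by linarith
    show ?thesis
    proof (cases "r n < R0")
      case True
      then show ?thesis using r' F3 eta(2) unfolding r_def x_def by linarith
    next
      case False
      then have rR: "R0 \<le> norm (x - e0)" unfolding r_def x_def by simp
      have cr: "c * norm (x - e0) \<le> norm (x + v - x1)" using hC xA x1B rR by blast
      have id: "(x - x1) - (e0 - w) = (x + v - x1) + (w - f0)" by (simp add: algebra_simps)
      have "norm (x + v - x1) \<le> norm ((x + v - x1) + (w - f0)) + norm (w - f0)" by (rule ntri2)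
      then have lo: "norm (x + v - x1) - \<eta> \<le> norm ((x - x1) - (e0 - w))" unfolding id using wn by linarith
      have "c * R0 \<le> c * norm (x - e0)" using rR c by (intro mult_left_mono) auto
      then have Y: "c * norm (x - e0) / 2 \<le> norm ((x - x1) - (e0 - w))" using lo cr eta(3) by linarith
      have X: "norm (x1 - w) \<le> norm (x - e0) * (1 - c\<^sup>2 / 8)"
        by (rule real_aux2[OF norm_ge_zero c F1 Y norm_ge_zero])
      have "k * R0 \<le> k * norm (x - e0)" using rR k0 by (intro mult_left_mono) auto
      then have "r (Suc n) \<le> norm (x - e0)" using r' X eta(4) unfolding k_def by (simp add: algebra_simps)
      then show ?thesis unfolding r_def x_def by simp
    qed
  qed
  have ind: "r (N1 + m) \<le> max (r N1) (R0 + 2)" for m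
  proof (induction m)
    case 0 then show ?case by simp
  next
    case (Suc m)
    have "r (Suc (N1 + m)) \<le> max (r (N1 + m)) (R0 + 2)" by (rule step) simp
    then show ?case using Suc.IH by simp
  qed
  define K where "K = max (Max (r ` {..N1})) (max (r N1) (R0 + 2))"
  have "norm (a n - e0) \<le> K" for n
  proof (cases "n \<le> N1")
    case True
    then have "r n \<le> Max (r ` {..N1})" by (intro Max_ge) auto
    then show ?thesis unfolding K_def r_def by simp
  next
    case False
    then obtain m where "n = N1 + m" by (metis le_add_diff_inverse nat_le_linear)
    then show ?thesis using ind[of m] unfolding K_def r_def by simp
  qed
  then show ?thesis using that by blast
qed

end


lemma real_aux3:
  fixes X Y R L \<delta> :: real
  assumes "X\<^sup>2 + Y\<^sup>2 \<le> R\<^sup>2" "\<delta> \<le> Y" "0 \<le> X" "0 \<le> R" "R \<le> L" "\<delta> \<le> L" "0 < \<delta>"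
  shows "X \<le> R - \<delta>\<^sup>2 / (2 * L)"
proof -
  define k where "k = \<delta>\<^sup>2 / (2 * L)"
  have L0: "L > 0" using assms by linarith
  have Y0: "0 \<le> Y" using assms by linarith
  have "Y\<^sup>2 \<le> R\<^sup>2" using assms(1) zero_le_power2[of X] by linarith
  then have YR: "Y \<le> R" using assms(4) by (rule power2_le_imp_le)
  have kd: "k \<le> \<delta> / 2"
  proof -
    have "\<delta>\<^sup>2 \<le> \<delta> * L" using assms(6,7) by (simp add: power2_eq_square)
    then have "\<delta>\<^sup>2 / (2 * L) \<le> (\<delta> * L) / (2 * L)" using L0 by (intro divide_right_mono) auto
    also have "\<dots> = \<delta> / 2" using L0 by simp
    finally show ?thesis unfolding k_def .
  qed
  have k0: "0 \<le> k" unfolding k_def using L0 by simp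
  have Rk: "0 \<le> R - k" using kd YR assms(2,7) by linarith
  have "\<delta>\<^sup>2 \<le> Y\<^sup>2" using assms(2,7) by (intro power_mono) auto
  then have "X\<^sup>2 \<le> R\<^sup>2 - \<delta>\<^sup>2" using assms(1) by linarith
  also have "\<dots> \<le> (R - k)\<^sup>2"
  proof -
    have "2 * k * R \<le> 2 * k * L" using assms(5) k0 by (intro mult_left_mono) auto
    also have "\<dots> = \<delta>\<^sup>2" unfolding k_def using L0 by simp
    finally have "2 * k * R \<le> \<delta>\<^sup>2" .
    moreover have "(R - k)\<^sup>2 = R\<^sup>2 - 2 * k * R + k\<^sup>2" by (simp add: power2_eq_square algebra_simps)
    moreover have "0 \<le> k\<^sup>2" by simp
    ultimately show ?thesis by linarith
  qed
  finally have "X\<^sup>2 \<le> (R - k)\<^sup>2" .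
  then have "X \<le> R - k" by (rule power2_le_imp_le) (rule Rk)
  then show ?thesis unfolding k_def .
qed

lemma seq_lemma:
  fixes g :: "nat \<Rightarrow> real"
  assumes g0: "\<And>n. 0 \<le> g n" and k: "\<kappa> > 0" and he: "h \<le> \<epsilon>"
    and s1: "\<And>n. n \<ge> N \<Longrightarrow> g n > h \<Longrightarrow> g (Suc n) \<le> g n - \<kappa>"
    and s2: "\<And>n. n \<ge> N \<Longrightarrow> g n \<le> h \<Longrightarrow> g (Suc n) \<le> \<epsilon>"
  shows "\<exists>N'. \<forall>n\<ge>N'. g n \<le> \<epsilon>"
proof -
  have "\<exists>n1\<ge>N. g n1 \<le> h"
  proof (rule ccontr)
    assume "\<not> ?thesis"
    then have gt: "\<And>n. n \<ge> N \<Longrightarrow> g n > h" by force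
    have dec: "g (N + m) \<le> g N - real m * \<kappa>" for m
    proof (induction m)
      case 0 then show ?case by simp
    next
      case (Suc m)
      have "g (Suc (N + m)) \<le> g (N + m) - \<kappa>" using s1 gt by simp
      then show ?case using Suc.IH by (simp add: algebra_simps)
    qed
    obtain m :: nat where m: "g N / \<kappa> < real m" using reals_Archimedean2 by blast
    then have "g N < real m * \<kappa>" using k by (simp add: field_simps)
    then show False using dec[of m] g0[of "N + m"] by linarith
  qed
  then obtain n1 where n1: "n1 \<ge> N" "g n1 \<le> h" by blast
  have "g (n1 + m) \<le> \<epsilon>" for m
  proof (induction m)
    case 0 then show ?case using n1 he by simp
  next
    case (Suc m)
    show ?case
    proof (cases "g (n1 + m) \<le> h")
      case True then show ?thesis using s2[of "n1 + m"] n1 by simp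
    next
      case False then show ?thesis using s1[of "n1 + m"] n1 Suc.IH k by simp
    qed
  qed
  then show ?thesis by (metis le_add_diff_inverse)
qed

context iter begin

lemma ev_PB: "\<tau> > 0 \<Longrightarrow> eventually (\<lambda>n. \<forall>y. norm y \<le> R \<longrightarrow> norm (metric_proj (Bs (Suc n)) y - metric_proj B y) \<le> \<tau>) sequentially"
proof -
  assume t: "\<tau> > 0"
  have "eventually (\<lambda>n. \<forall>y. norm y \<le> R \<longrightarrow> norm (metric_proj (Bs n) y - metric_proj B y) \<le> \<tau>) sequentially"
    using proj_conv[OF clB cvB neB _ awB t] sets_ok by blast
  then show ?thesis
    by (subst eventually_sequentially_Suc[of "\<lambda>n. \<forall>y. norm y \<le> R \<longrightarrow> norm (metric_proj (Bs n) y - metric_proj B y) \<le> \<tau>"])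
qed

lemma ev_PA: "\<tau> > 0 \<Longrightarrow> eventually (\<lambda>n. \<forall>y. norm y \<le> R \<longrightarrow> norm (metric_proj (As (Suc n)) y - metric_proj A y) \<le> \<tau>) sequentially"
proof -
  assume t: "\<tau> > 0"
  have "eventually (\<lambda>n. \<forall>y. norm y \<le> R \<longrightarrow> norm (metric_proj (As n) y - metric_proj A y) \<le> \<tau>) sequentially"
    using proj_conv[OF clA cvA neA _ awA t] sets_ok by blast
  then show ?thesis
    by (subst eventually_sequentially_Suc[of "\<lambda>n. \<forall>y. norm y \<le> R \<longrightarrow> norm (metric_proj (As n) y - metric_proj A y) \<le> \<tau>"])
qed

lemma one_step:
  assumes PB: "norm (metric_proj (Bs (Suc n)) (a n) - metric_proj B (a n)) \<le> \<tau>"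
      and PA: "norm (metric_proj (As (Suc n)) (b (Suc n)) - metric_proj A (b (Suc n))) \<le> \<tau>"
      and e: "e \<in> E"
  shows "norm (b (Suc n) - (e + v)) \<le> norm (metric_proj B (a n) - (e + v)) + \<tau>"
    and "norm (a (Suc n) - e) \<le> norm (metric_proj B (a n) - (e + v)) + 2 * \<tau>"
    and "(norm (metric_proj B (a n) - (e + v)))\<^sup>2 + (norm (a n + v - metric_proj B (a n)))\<^sup>2 \<le> (norm (a n - e))\<^sup>2"
proof -
  define x where "x = a n"
  define p where "p = metric_proj B x"
  define x1 where "x1 = b (Suc n)"
  have x1d: "x1 = metric_proj (Bs (Suc n)) x" unfolding x1_def x_def by (rule b_Suc)
  have x2d: "a (Suc n) = metric_proj (As (Suc n)) x1" unfolding x1_def by (rule a_Suc)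
  have h1: "norm (x1 - (e + v)) \<le> norm (p - (e + v)) + \<tau>"
  proof -
    have "norm (x1 - (e + v)) \<le> norm (x1 - p) + norm (p - (e + v))" by (rule ntri)
    then show ?thesis using PB unfolding x1d p_def x_def by linarith
  qed
  then show "norm (b (Suc n) - (e + v)) \<le> norm (metric_proj B (a n) - (e + v)) + \<tau>"
    unfolding x1_def p_def x_def .
  have "norm (a (Suc n) - e) \<le> norm (a (Suc n) - metric_proj A x1) + norm (metric_proj A x1 - e)" by (rule ntri)
  moreover have "norm (metric_proj A x1 - e) \<le> norm (x1 - (e + v))"
    using proj_nonexp[OF clA cvA neA, of x1 "e + v"] PA_F[OF e] by simp
  ultimately show "norm (a (Suc n) - e) \<le> norm (metric_proj B (a n) - (e + v)) + 2 * \<tau>"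
    using PA h1 unfolding x2d x1_def p_def x_def by linarith
  have F: "(norm (metric_proj B x - metric_proj B e))\<^sup>2 + (norm ((x - metric_proj B x) - (e - metric_proj B e)))\<^sup>2 \<le> (norm (x - e))\<^sup>2"
    by (rule proj_firm[OF clB cvB neB])
  have i: "(x - metric_proj B x) - (e - (e + v)) = x + v - metric_proj B x" by (simp add: algebra_simps)
  show "(norm (metric_proj B (a n) - (e + v)))\<^sup>2 + (norm (a n + v - metric_proj B (a n)))\<^sup>2 \<le> (norm (a n - e))\<^sup>2"
    using F unfolding PB_E[OF e] i unfolding x_def .
qed

end


lemma ntri3:
  fixes x y z :: "'a::real_normed_vector"
  shows "norm x \<le> norm (x - y) + norm (y - z) + norm z"
  using ntri[where x=x and y=y and z=z] norm_triangle_sub[of x z] by linarith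

context iter begin

lemma conv_main: "(\<lambda>n. infdist (a n) E) \<longlonglongrightarrow> 0 \<and> (\<lambda>n. infdist (b n) F) \<longlonglongrightarrow> 0"
proof -
  obtain K where K: "\<And>n. norm (a n - e0) \<le> K" using bounded_a by blast
  obtain D where D0: "D \<ge> 0" and DE: "\<And>e. e \<in> E \<Longrightarrow> norm (e - e0) \<le> D" using D_bound by blast
  have K0: "K \<ge> 0" using K[of 0] norm_ge_zero[of "a 0 - e0"] by linarith
  define Ra where "Ra = K + norm e0"
  define Rb where "Rb = K + 1 + norm f0"
  have aR: "norm (a n) \<le> Ra" for n
    using norm_triangle_sub[of "a n" e0] K[of n] unfolding Ra_def by linarith
  have evbb: "eventually (\<lambda>n. norm (b (Suc n)) \<le> Rb) sequentially"
  proof -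
    have "eventually (\<lambda>n. norm (metric_proj (Bs (Suc n)) e0 - f0) \<le> 1) sequentially"
      using ev_w[of 1] by (subst eventually_sequentially_Suc[of "\<lambda>n. norm (metric_proj (Bs n) e0 - f0) \<le> 1"]) simp
    then show ?thesis
    proof (rule eventually_mono)
      fix n assume w: "norm (metric_proj (Bs (Suc n)) e0 - f0) \<le> 1"
      have B': "closed (Bs (Suc n))" "convex (Bs (Suc n))" "Bs (Suc n) \<noteq> {}" using Bs_ok[of "Suc n"] by auto
      have "norm (b (Suc n) - metric_proj (Bs (Suc n)) e0) \<le> norm (a n - e0)"
        unfolding b_Suc by (rule proj_nonexp[OF B'])
      moreover have "norm (b (Suc n)) \<le> norm (b (Suc n) - metric_proj (Bs (Suc n)) e0) + norm (metric_proj (Bs (Suc n)) e0 - f0) + norm f0"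
        by (rule ntri3)
      ultimately show "norm (b (Suc n)) \<le> Rb" using w K[of n] unfolding Rb_def by linarith
    qed
  qed
  define g where "g n = infdist (a n) E" for n
  have g0: "0 \<le> g n" for n unfolding g_def by (rule infdist_nonneg)
  have evstep: "eventually (\<lambda>n. n \<ge> 1 \<and> norm (metric_proj (Bs (Suc n)) (a n) - metric_proj B (a n)) \<le> \<tau>
      \<and> norm (metric_proj (As (Suc n)) (b (Suc n)) - metric_proj A (b (Suc n))) \<le> \<tau>) sequentially"
    if t: "\<tau> > 0" for \<tau>
  proof -
    have e1: "eventually (\<lambda>n. n \<ge> 1) sequentially" by (rule eventually_ge_at_top)
    have e2: "eventually (\<lambda>n. \<forall>y. norm y \<le> Ra \<longrightarrow> norm (metric_proj (Bs (Suc n)) y - metric_proj B y) \<le> \<tau>) sequentially"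
      by (rule ev_PB[OF t])
    have e3: "eventually (\<lambda>n. \<forall>y. norm y \<le> Rb \<longrightarrow> norm (metric_proj (As (Suc n)) y - metric_proj A y) \<le> \<tau>) sequentially"
      by (rule ev_PA[OF t])
    show ?thesis
      using eventually_conj[OF e1 eventually_conj[OF e2 eventually_conj[OF e3 evbb]]]
      by (rule eventually_mono) (use aR in blast)
  qed
  have La: "\<exists>N. \<forall>n\<ge>N. g n \<le> \<epsilon>" if ep: "\<epsilon> > 0" for \<epsilon>
  proof -
    have ep2: "\<epsilon> / 2 > 0" using ep by simp
    obtain \<delta> where d: "\<delta> > 0" and regd: "\<And>x. infdist x A \<le> \<delta> \<Longrightarrow> infdist (x + v) B \<le> \<delta> \<Longrightarrow> infdist x E \<le> \<epsilon> / 2"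
      using regular_use[OF reg ep2] by blast
    define L where "L = K + D + \<delta>"
    define kk where "kk = \<delta>\<^sup>2 / (2 * L)"
    define \<tau> where "\<tau> = min (kk / 6) (\<epsilon> / 6)"
    have L0: "L > 0" "\<delta> \<le> L" unfolding L_def using K0 D0 d by auto
    have kk0: "kk > 0" unfolding kk_def using d L0 by simp
    have tau: "\<tau> > 0" "\<tau> \<le> kk / 6" "\<tau> \<le> \<epsilon> / 6" unfolding \<tau>_def using kk0 ep by auto
    have evA: "eventually (\<lambda>n. \<forall>x\<in>As n. norm x \<le> Ra \<longrightarrow> infdist x A \<le> \<delta>) sequentially"
      using aw_eventually[OF awA d, of Ra] by (rule eventually_mono) blast
    obtain N where N: "\<And>n. n \<ge> N \<Longrightarrow> (n \<ge> 1 \<and> norm (metric_proj (Bs (Suc n)) (a n) - metric_proj B (a n)) \<le> \<tau>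
      \<and> norm (metric_proj (As (Suc n)) (b (Suc n)) - metric_proj A (b (Suc n))) \<le> \<tau>)
      \<and> (\<forall>x\<in>As n. norm x \<le> Ra \<longrightarrow> infdist x A \<le> \<delta>)"
      using eventually_conj[OF evstep[OF tau(1)] evA] unfolding eventually_sequentially by blast
    have common: "\<exists>e\<in>E. norm (a n - e) < g n + \<tau> \<and> norm (a n - e) \<le> L - \<delta>
        \<and> norm (a (Suc n) - e) \<le> norm (metric_proj B (a n) - (e + v)) + 2 * \<tau>
        \<and> (norm (metric_proj B (a n) - (e + v)))\<^sup>2 + (norm (a n + v - metric_proj B (a n)))\<^sup>2 \<le> (norm (a n - e))\<^sup>2"
      if n: "n \<ge> N" for n
    proof -
      have "g n < g n + \<tau>" using tau by simp
      then obtain e where e: "e \<in> E" and de: "dist (a n) e < g n + \<tau>"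
        using infdist_lessE[OF neE] unfolding g_def by blast
      have os: "norm (a (Suc n) - e) \<le> norm (metric_proj B (a n) - (e + v)) + 2 * \<tau>"
        "(norm (metric_proj B (a n) - (e + v)))\<^sup>2 + (norm (a n + v - metric_proj B (a n)))\<^sup>2 \<le> (norm (a n - e))\<^sup>2"
        using one_step(2,3)[OF _ _ e] N[OF n] by blast+
      have "norm (a n - e) \<le> norm (a n - e0) + norm (e0 - e)" by (rule ntri)
      moreover have "norm (e0 - e) \<le> D" using DE[OF e] by (simp add: norm_minus_commute)
      ultimately have "norm (a n - e) \<le> L - \<delta>" using K[of n] unfolding L_def by linarith
      then show ?thesis using e de os by (auto simp: dist_norm)
    qed
    have s1: "g (Suc n) \<le> g n - kk / 2" if n: "n \<ge> N" and gt: "g n > \<epsilon> / 2" for n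
    proof -
      obtain e where e: "e \<in> E" and c1: "norm (a n - e) < g n + \<tau>" and c2: "norm (a n - e) \<le> L - \<delta>"
        and c3: "norm (a (Suc n) - e) \<le> norm (metric_proj B (a n) - (e + v)) + 2 * \<tau>"
        and c4: "(norm (metric_proj B (a n) - (e + v)))\<^sup>2 + (norm (a n + v - metric_proj B (a n)))\<^sup>2 \<le> (norm (a n - e))\<^sup>2"
        using common[OF n] by blast
      have n1: "n \<ge> 1" using N[OF n] by blast
      have iA: "infdist (a n) A \<le> \<delta>" using N[OF n] a_in[OF n1] aR[of n] by blast
      have "\<not> infdist (a n + v) B \<le> \<delta>" using regd[OF iA] gt unfolding g_def by force
      then have lt: "\<delta> < infdist (a n + v) B" by simp
      have "infdist (a n + v) B \<le> dist (a n + v) (metric_proj B (a n))"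
        by (rule infdist_le) (rule proj_in[OF clB cvB neB])
      then have Y: "\<delta> \<le> norm (a n + v - metric_proj B (a n))" using lt unfolding dist_norm by linarith
      have X: "norm (metric_proj B (a n) - (e + v)) \<le> norm (a n - e) - \<delta>\<^sup>2 / (2 * L)"
        by (rule real_aux3[OF c4 Y norm_ge_zero norm_ge_zero _ L0(2) d]) (use c2 d in linarith)
      have "g (Suc n) \<le> dist (a (Suc n)) e" unfolding g_def by (rule infdist_le[OF e])
      then show ?thesis using c1 c3 X tau unfolding kk_def[symmetric] dist_norm by linarith
    qed
    have s2: "g (Suc n) \<le> \<epsilon>" if n: "n \<ge> N" and le: "g n \<le> \<epsilon> / 2" for n
    proof -
      obtain e where e: "e \<in> E" and c1: "norm (a n - e) < g n + \<tau>"
        and c3: "norm (a (Suc n) - e) \<le> norm (metric_proj B (a n) - (e + v)) + 2 * \<tau>"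
        and c4: "(norm (metric_proj B (a n) - (e + v)))\<^sup>2 + (norm (a n + v - metric_proj B (a n)))\<^sup>2 \<le> (norm (a n - e))\<^sup>2"
        using common[OF n] by blast
      have "(norm (metric_proj B (a n) - (e + v)))\<^sup>2 \<le> (norm (a n - e))\<^sup>2"
        using c4 zero_le_power2[of "norm (a n + v - metric_proj B (a n))"] by linarith
      then have X: "norm (metric_proj B (a n) - (e + v)) \<le> norm (a n - e)" by (rule power2_le_imp_le) simp
      have "g (Suc n) \<le> dist (a (Suc n)) e" unfolding g_def by (rule infdist_le[OF e])
      then show ?thesis using c1 c3 X tau le unfolding dist_norm by linarith
    qed
    have kk2: "kk / 2 > 0" using kk0 by simp
    have he: "\<epsilon> / 2 \<le> \<epsilon>" using ep by simp
    show ?thesis by (rule seq_lemma[of g "kk / 2" "\<epsilon> / 2" \<epsilon> N, OF g0 kk2 he s1 s2])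
  qed
  have Lb: "\<exists>N. \<forall>n\<ge>N. infdist (b (Suc n)) F \<le> g n + r" if r: "r > 0" for r
  proof -
    have r2: "r / 2 > 0" using r by simp
    obtain N where N: "\<And>n. n \<ge> N \<Longrightarrow> n \<ge> 1 \<and> norm (metric_proj (Bs (Suc n)) (a n) - metric_proj B (a n)) \<le> r / 2
      \<and> norm (metric_proj (As (Suc n)) (b (Suc n)) - metric_proj A (b (Suc n))) \<le> r / 2"
      using evstep[OF r2] unfolding eventually_sequentially by blast
    have "infdist (b (Suc n)) F \<le> g n + r" if n: "n \<ge> N" for n
    proof -
      have "g n < g n + r / 2" using r by simp
      then obtain e where e: "e \<in> E" and de: "dist (a n) e < g n + r / 2"
        using infdist_lessE[OF neE] unfolding g_def by blast
      have os: "norm (b (Suc n) - (e + v)) \<le> norm (metric_proj B (a n) - (e + v)) + r / 2"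
        "(norm (metric_proj B (a n) - (e + v)))\<^sup>2 + (norm (a n + v - metric_proj B (a n)))\<^sup>2 \<le> (norm (a n - e))\<^sup>2"
        using one_step(1,3)[OF _ _ e] N[OF n] by blast+
      have "(norm (metric_proj B (a n) - (e + v)))\<^sup>2 \<le> (norm (a n - e))\<^sup>2"
        using os(2) zero_le_power2[of "norm (a n + v - metric_proj B (a n))"] by linarith
      then have X: "norm (metric_proj B (a n) - (e + v)) \<le> norm (a n - e)" by (rule power2_le_imp_le) simp
      have "infdist (b (Suc n)) F \<le> dist (b (Suc n)) (e + v)" by (rule infdist_le[OF F_of_E[OF e]])
      then show ?thesis using os(1) X de unfolding dist_norm by linarith
    qed
    then show ?thesis by blast
  qed
  have ga: "g \<longlonglongrightarrow> 0"
  proof (rule LIMSEQ_I)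
    fix r :: real assume r: "r > 0"
    obtain N where N: "\<forall>n\<ge>N. g n \<le> r / 2" using La[of "r / 2"] r by auto
    have "norm (g n - 0) < r" if "n \<ge> N" for n
    proof -
      have "g n \<le> r / 2" using N that by blast
      then show ?thesis using g0[of n] r by simp
    qed
    then show "\<exists>no. \<forall>n\<ge>no. norm (g n - 0) < r" by blast
  qed
  have gb: "(\<lambda>n. infdist (b n) F) \<longlonglongrightarrow> 0"
  proof (rule LIMSEQ_I)
    fix r :: real assume r: "r > 0"
    obtain N1 where N1: "\<forall>n\<ge>N1. g n \<le> r / 4" using La[of "r / 4"] r by auto
    obtain N2 where N2: "\<forall>n\<ge>N2. infdist (b (Suc n)) F \<le> g n + r / 4" using Lb[of "r / 4"] r by auto
    have "norm (infdist (b n) F - 0) < r" if n: "n \<ge> Suc (max N1 N2)" for n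
    proof -
      obtain m where m: "n = Suc m" "m \<ge> max N1 N2" using n by (cases n) auto
      have "infdist (b n) F \<le> r / 2" using N1 N2 m by fastforce
      then show ?thesis using r infdist_nonneg[of "b n" F] by simp
    qed
    then show "\<exists>no. \<forall>n\<ge>no. norm (infdist (b n) F - 0) < r" by blast
  qed
  show ?thesis using ga gb unfolding g_def by simp
qed

end


theorem theorem4p10:
  fixes A B :: "'a::{real_inner, complete_space} set"
  assumes "closed A" "convex A" "A \<noteq> {}"
      and "closed B" "convex B" "B \<noteq> {}"
      and "near_A A B \<noteq> {}" "near_B A B \<noteq> {}"
      and "bounded (near_A A B)" "bounded (near_B A B)"
      and "regular_couple A B"
  shows "d_stable A B"
  unfolding d_stable_def
proof (intro allI impI)
  fix As Bs :: "nat \<Rightarrow> 'a set" and a0 :: 'a and a b :: "nat \<Rightarrow> 'a"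
  assume h1: "(\<forall>n\<ge>1. closed (As n) \<and> convex (As n) \<and> As n \<noteq> {}
                    \<and> closed (Bs n) \<and> convex (Bs n) \<and> Bs n \<noteq> {})
        \<and> aw_converges As A \<and> aw_converges Bs B"
  assume h2: "a 0 = a0 \<and>
           (\<forall>n\<ge>1. b n = metric_proj (Bs n) (a (n - 1)) \<and> a n = metric_proj (As n) (b n))"
  have it: "iter A B As Bs a b"
    using assms h1 h2 by (intro iter.intro prob.intro iter_axioms.intro) auto
  show "(\<lambda>n. infdist (a n) (near_A A B)) \<longlonglongrightarrow> 0 \<and> (\<lambda>n. infdist (b n) (near_B A B)) \<longlonglongrightarrow> 0"
    by (rule iter.conv_main[OF it])
qed

end
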